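(* Let $(A,\{m_k\}_{k\ge0})$ be a $\mathbb Z_2$-graded filtered $A_\infty$-algebra over $\Lambda_0$ with a unit $\mathbf 1$, free of finite rank with a basis consisting of $\mathbf 1$, a finite set $\{X_e\}_{e\in E}$ of odd-degree elements, a set $\{X_f\}_{f\in F}$ of even-degree elements, and possibly further odd-degree elements (e.g. $A$ is the Floer cochain complex of a compact immersed Lagrangian, with $X_e$ the odd-degree immersed generators). Let $K=\Lambda_0\langle\langle x_e:e\in E\rangle\rangle$ be the algebra of noncommutative formal power series in variables $x_e$ of degree $0$, and extend the $A_\infty$-operations to $K\widehat\otimes_{\Lambda_0}A$ by the rule $m_k(f_1Y_1,\dots,f_kY_k)=f_k\cdots f_1\,m_k(Y_1,\dots,Y_k)$ for $f_j\in K$. Put $b=\sum_{e\in E}x_eX_e$ and write $$m_0^b:=\sum_{k\ge0}m_k(b,\dots,b)=W\cdot\mathbf 1+\sum_{f\in F}P_f\,X_f\qquad(W,P_f\in K).$$ Let $\mathcal A=K/\langle P_f:f\in F\rangle$, the quotient by the completed two-sided ideal generated by the $P_f$. Then the image of $W$ in $\mathcal A$ is central: $W\cdot x_e=x_e\cdot W$ in $\mathcal A$ for every $e\in E$.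
   Context: The $A_\infty$-operations $m_k$ have degree one with respect to the shifted grading $|v|'=|v|-1$ and satisfy the $A_\infty$-equations $\sum_{k_1+k_2=n+1}\sum_i(-1)^{\sum_{j<i}|v_j|'}m_{k_1}(v_1,\dots,m_{k_2}(v_i,\dots,v_{i+k_2-1}),\dots,v_n)=0$. An element $\mathbf 1$ of degree $0$ is a unit if $m_2(\mathbf 1,v)=v$, $(-1)^{|w|}m_2(w,\mathbf 1)=w$ for all $v,w$, and $m_k(\dots,\mathbf 1,\dots)=0$ for $k\neq2$. Since $b$ has odd degree, $m_0^b$ has even degree, so its expansion in the basis involves only $\mathbf 1$ and the even elements $X_f$. The sum defining $m_0^b$ converges in $K\widehat\otimes A$ because $m_k(b,\dots,b)$ is homogeneous of degree $k$ in the variables $x_e$. The completed two-sided ideal $\langle P_f\rangle$ is the closure of the two-sided ideal generated by the $P_f$. *)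

theory Defs
  imports Complex_Main "HOL-Library.Function_Algebras"
begin

text \<open>An element \<open>\<Sum> a_i T^{\<lambda>_i}\<close> (with \<open>\<lambda>_i \<ge> 0\<close>, \<open>\<lambda>_i \<rightarrow> \<infinity>\<close>) is represented by its
  coefficient function \<open>a :: real \<Rightarrow> 'k\<close> (\<open>a \<lambda>\<close> = coefficient of \<open>T^\<lambda>\<close>).
  Addition, zero and negation are pointwise (Function_Algebras).\<close>

definition novikov0 :: "(real \<Rightarrow> 'k::field) set" where
  "novikov0 = {a. (\<forall>t<0. a t = 0) \<and> (\<forall>C. finite {t. t \<le> C \<and> a t \<noteq> 0})}"

definition nov_one :: "real \<Rightarrow> 'k::field" where
  "nov_one = (\<lambda>t. if t = 0 then 1 else 0)"

definition nov_mult :: "(real \<Rightarrow> 'k::field) \<Rightarrow> (real \<Rightarrow> 'k) \<Rightarrow> (real \<Rightarrow> 'k)" where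
  "nov_mult a b = (\<lambda>t. \<Sum>s\<in>{s. s \<le> t \<and> a s \<noteq> 0}. a s * b (t - s))"

definition nov_sign :: "nat \<Rightarrow> (real \<Rightarrow> 'k::field) \<Rightarrow> (real \<Rightarrow> 'k)" where
  "nov_sign s a = (if even s then a else - a)"

text \<open>A series is a function from words to \<Lambda>_0; the word \<open>[a1,...,an]\<close> stands for the
  monomial \<open>x_{a1} x_{a2} ... x_{an}\<close>.  Addition, zero, negation are pointwise.\<close>

type_synonym ('e, 'k) ncseries = "'e list \<Rightarrow> real \<Rightarrow> 'k"

definition nc_series :: "('e, 'k::field) ncseries set" where
  "nc_series = {f. \<forall>w. f w \<in> novikov0}"

definition nc_mult :: "('e, 'k::field) ncseries \<Rightarrow> ('e, 'k) ncseries \<Rightarrow> ('e, 'k) ncseries" where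
  "nc_mult f g = (\<lambda>w. \<Sum>i\<le>length w. nov_mult (f (take i w)) (g (drop i w)))"

definition nc_const :: "(real \<Rightarrow> 'k::field) \<Rightarrow> ('e, 'k) ncseries" where
  "nc_const c = (\<lambda>w. if w = [] then c else 0)"

definition nc_one :: "('e, 'k::field) ncseries" where
  "nc_one = nc_const nov_one"

definition nc_var :: "'e \<Rightarrow> ('e, 'k::field) ncseries" where
  "nc_var e = (\<lambda>w. if w = [e] then nov_one else 0)"

definition nc_prod :: "('e, 'k::field) ncseries list \<Rightarrow> ('e, 'k) ncseries" where
  "nc_prod fs = foldr nc_mult fs nc_one"

inductive_set nc_ideal :: "('e, 'k::field) ncseries set \<Rightarrow> ('e, 'k) ncseries set"
  for S :: "('e, 'k) ncseries set" where
  gen: "s \<in> S \<Longrightarrow> s \<in> nc_ideal S"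
| zero: "0 \<in> nc_ideal S"
| add: "a \<in> nc_ideal S \<Longrightarrow> b \<in> nc_ideal S \<Longrightarrow> a + b \<in> nc_ideal S"
| lmult: "a \<in> nc_ideal S \<Longrightarrow> g \<in> nc_series \<Longrightarrow> nc_mult g a \<in> nc_ideal S"
| rmult: "a \<in> nc_ideal S \<Longrightarrow> g \<in> nc_series \<Longrightarrow> nc_mult a g \<in> nc_ideal S"

text \<open>Closure in the formal-power-series (x-adic) topology of K.\<close>
definition nc_closure :: "('e, 'k::field) ncseries set \<Rightarrow> ('e, 'k) ncseries set" where
  "nc_closure I = {g \<in> nc_series. \<forall>N. \<exists>h\<in>I. \<forall>w. length w < N \<longrightarrow> g w = h w}"

definition completed_ideal :: "('e, 'k::field) ncseries set \<Rightarrow> ('e, 'k) ncseries set" where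
  "completed_ideal S = nc_closure (nc_ideal S)"

text \<open>\<open>A\<close> is free over \<Lambda>_0 with finite basis indexed by the finite type \<open>'i\<close>;
  \<open>isodd i\<close> says the basis element \<open>Y_i\<close> has odd degree.  The operation \<open>m_k\<close> is encoded
  by its structure constants: \<open>m [i_1,...,i_k] j \<in> \<Lambda>_0\<close> is the coefficient of \<open>Y_j\<close> in
  \<open>m_k(Y_{i_1},...,Y_{i_k})\<close>; \<open>m_k\<close> is the \<Lambda>_0-multilinear extension.\<close>

text \<open>shifted degree \<open>|Y_i|' = |Y_i| - 1\<close> mod 2\<close>
definition sdeg :: "('i \<Rightarrow> bool) \<Rightarrow> 'i \<Rightarrow> nat" where
  "sdeg isodd i = (if isodd i then 0 else 1)"

definition structure_constants_in_novikov :: "('i list \<Rightarrow> 'i \<Rightarrow> real \<Rightarrow> 'k::field) \<Rightarrow> bool" where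
  "structure_constants_in_novikov m \<longleftrightarrow> (\<forall>is j. m is j \<in> novikov0)"

definition degree_one :: "('i \<Rightarrow> bool) \<Rightarrow> ('i list \<Rightarrow> 'i \<Rightarrow> real \<Rightarrow> 'k::field) \<Rightarrow> bool" where
  "degree_one isodd m \<longleftrightarrow>
     (\<forall>is j. m is j \<noteq> 0 \<longrightarrow> even (sdeg isodd j + (\<Sum>i\<leftarrow>is. sdeg isodd i) + 1))"

text \<open>The A-infinity equations evaluated on basis elements \<open>v_1..v_n\<close> (list \<open>vs\<close>), coefficient
  of the output basis element \<open>Y_j\<close>: the inner operation \<open>m_{k2}\<close> acts on \<open>vs[p..p+k2-1]\<close>
  (0-based), sign \<open>(-1)^{\<Sum>_{q<p} |v_q|'}\<close>, and \<open>k1 = n - k2 + 1\<close>.\<close>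
definition ainf_equations :: "('i::finite \<Rightarrow> bool) \<Rightarrow> ('i list \<Rightarrow> 'i \<Rightarrow> real \<Rightarrow> 'k::field) \<Rightarrow> bool" where
  "ainf_equations isodd m \<longleftrightarrow>
     (\<forall>vs j. (\<Sum>k2\<in>{0..length vs}. \<Sum>p\<in>{0..length vs - k2}.
        nov_sign (\<Sum>q<p. sdeg isodd (vs ! q))
          (\<Sum>l\<in>UNIV. nov_mult (m (take k2 (drop p vs)) l) (m (take p vs @ [l] @ drop (p + k2) vs) j)))
      = 0)"

text \<open>Filtration: with \<Lambda>_0-valued structure constants all \<open>m_k\<close> preserve the energy filtration;
  in addition (FOOO) the curvature \<open>m_0(1)\<close> has strictly positive energy.\<close>
definition curvature_positive_energy :: "('i list \<Rightarrow> 'i \<Rightarrow> real \<Rightarrow> 'k::field) \<Rightarrow> bool" where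
  "curvature_positive_energy m \<longleftrightarrow> (\<forall>j. m [] j 0 = 0)"

definition Z2_filtered_Ainf_algebra ::
  "('i::finite \<Rightarrow> bool) \<Rightarrow> ('i list \<Rightarrow> 'i \<Rightarrow> real \<Rightarrow> 'k::field) \<Rightarrow> bool" where
  "Z2_filtered_Ainf_algebra isodd m \<longleftrightarrow>
     structure_constants_in_novikov m \<and> degree_one isodd m \<and> ainf_equations isodd m
     \<and> curvature_positive_energy m"

definition ainf_unit :: "('i \<Rightarrow> bool) \<Rightarrow> ('i list \<Rightarrow> 'i \<Rightarrow> real \<Rightarrow> 'k::field) \<Rightarrow> 'i \<Rightarrow> bool" where
  "ainf_unit isodd m u \<longleftrightarrow>
     \<not> isodd u \<and>
     (\<forall>i j. m [u, i] j = (if i = j then nov_one else 0)) \<and>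
     (\<forall>i j. nov_sign (if isodd i then 1 else 0) (m [i, u] j) = (if i = j then nov_one else 0)) \<and>
     (\<forall>is j. length is \<noteq> 2 \<longrightarrow> u \<in> set is \<longrightarrow> m is j = 0)"

definition basis_shape :: "('i \<Rightarrow> bool) \<Rightarrow> 'i \<Rightarrow> ('e \<Rightarrow> 'i) \<Rightarrow> ('f \<Rightarrow> 'i) \<Rightarrow> bool" where
  "basis_shape isodd u Xe Xf \<longleftrightarrow>
     inj Xe \<and> inj Xf \<and> u \<notin> range Xe \<and> u \<notin> range Xf \<and> range Xe \<inter> range Xf = {} \<and>
     (\<forall>e. isodd (Xe e)) \<and> (\<forall>f. \<not> isodd (Xf f)) \<and>
     (\<forall>i. i \<noteq> u \<and> i \<notin> range Xe \<and> i \<notin> range Xf \<longrightarrow> isodd i)"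

text \<open>Elements of \<open>K \<hat>\<otimes> A\<close> (A free of finite rank) are \<open>'i \<Rightarrow> K\<close> (coefficient of each basis
  element).  The rule \<open>m_k(f_1 Y_1,...,f_k Y_k) = f_k\<cdots>f_1 m_k(Y_1,...,Y_k)\<close> extended
  multilinearly: coefficient of \<open>Y_j\<close> in \<open>m_k(g_1,...,g_k)\<close>.\<close>
definition ext_m :: "('i::finite list \<Rightarrow> 'i \<Rightarrow> real \<Rightarrow> 'k::field) \<Rightarrow> ('i \<Rightarrow> ('e, 'k) ncseries) list
                      \<Rightarrow> 'i \<Rightarrow> ('e, 'k) ncseries" where
  "ext_m m gs j = (\<Sum>is\<in>{is. length is = length gs}.
      nc_mult (nc_prod (rev (map2 (\<lambda>g i. g i) gs is))) (nc_const (m is j)))"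

definition bdy :: "('e::finite \<Rightarrow> 'i) \<Rightarrow> 'i \<Rightarrow> ('e, 'k::field) ncseries" where
  "bdy Xe = (\<lambda>i. \<Sum>e\<in>UNIV. if Xe e = i then nc_var e else 0)"

text \<open>The sum converges x-adically:
  \<open>m_k(b,...,b)\<close> is homogeneous of degree k in the \<open>x_e\<close>, so the coefficient of a word \<open>w\<close>
  only receives contributions from \<open>k = length w\<close>; we sum over \<open>k \<le> length w\<close>.\<close>
definition m0b :: "('i::finite list \<Rightarrow> 'i \<Rightarrow> real \<Rightarrow> 'k::field) \<Rightarrow> ('e::finite \<Rightarrow> 'i) \<Rightarrow> 'i
                   \<Rightarrow> ('e, 'k) ncseries" where
  "m0b m Xe j = (\<lambda>w. (\<Sum>k\<le>length w. ext_m m (replicate k (bdy Xe)) j) w)"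

end

theory Submission
  imports Defs
begin


lemma sum_fun_apply: "(sum F A) (x::'a list) = sum (\<lambda>a. F a x) A"
  by (induction A rule: infinite_finite_induct) auto

lemma diff_fun_apply': "(f - g) x = f x - g x" by simp

lemma nov0_zero: "0 \<in> novikov0" by (simp add: novikov0_def)

lemma nov0_one: "nov_one \<in> novikov0"
proof -
  have "{t. t \<le> C \<and> (nov_one t :: 'k::field) \<noteq> 0} \<subseteq> {0}" for C
    by (auto simp: nov_one_def split: if_splits)
  then have "finite {t. t \<le> C \<and> (nov_one t :: 'k::field) \<noteq> 0}" for C
    by (rule finite_subset) auto
  then show ?thesis by (auto simp: novikov0_def nov_one_def)
qed

lemma nov0_diff: assumes "a \<in> novikov0" "b \<in> novikov0" shows "a - b \<in> novikov0"
proof -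
  have "{t. t \<le> C \<and> (a - b) t \<noteq> 0} \<subseteq> {t. t \<le> C \<and> a t \<noteq> 0} \<union> {t. t \<le> C \<and> b t \<noteq> 0}" for C
    by auto
  moreover have "finite ({t. t \<le> C \<and> a t \<noteq> 0} \<union> {t. t \<le> C \<and> b t \<noteq> 0})" for C
    using assms unfolding novikov0_def by auto
  ultimately have "finite {t. t \<le> C \<and> (a - b) t \<noteq> 0}" for C
    by (meson finite_subset)
  then show ?thesis using assms unfolding novikov0_def by auto
qed

lemma nov_mult_zero_left[simp]: "nov_mult 0 b = 0"
  by (simp add: nov_mult_def fun_eq_iff)

lemma nov_mult_zero_right[simp]: "nov_mult a 0 = 0"
  by (simp add: nov_mult_def fun_eq_iff)

lemma nov_mult_uminus_right: "nov_mult a (- b) = - nov_mult a b"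
  by (simp add: nov_mult_def fun_eq_iff sum_negf)

lemma nov_mult_one_left: assumes "a \<in> novikov0" shows "nov_mult nov_one a = a"
proof
  fix t
  have S: "{s. s \<le> t \<and> (nov_one s :: 'a) \<noteq> 0} = (if 0 \<le> t then {0} else {})"
    by (auto simp: nov_one_def)
  show "nov_mult nov_one a t = a t"
  proof (cases "0 \<le> t")
    case True
    then show ?thesis unfolding nov_mult_def S by (simp add: nov_one_def)
  next
    case False
    then show ?thesis using assms unfolding nov_mult_def S by (simp add: novikov0_def)
  qed
qed

lemma nov_mult_one_right: assumes "a \<in> novikov0" shows "nov_mult a nov_one = a"
proof
  fix t
  have fin: "finite {s. s \<le> t \<and> a s \<noteq> 0}" using assms by (auto simp: novikov0_def)
  have "nov_mult a nov_one t = (\<Sum>s\<in>{s. s \<le> t \<and> a s \<noteq> 0}. if s = t then a s else 0)"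
    unfolding nov_mult_def by (intro sum.cong) (auto simp: nov_one_def)
  also have "\<dots> = a t" using fin by (simp add: sum.delta)
  finally show "nov_mult a nov_one t = a t" .
qed

lemma drop_eq_single: "i \<le> length w \<Longrightarrow> (drop i w = [e]) \<longleftrightarrow> (w \<noteq> [] \<and> i = length w - 1 \<and> last w = e)"
proof (induction w arbitrary: i rule: rev_induct)
  case Nil then show ?case by simp
next
  case (snoc x xs)
  show ?case
  proof (cases "i = length xs")
    case True then show ?thesis by simp
  next
    case False
    show ?thesis
    proof (cases "i = Suc (length xs)")
      case True then show ?thesis by simp
    next
      case F2: False
    then have "i < length xs" using snoc.prems False by simp
    then have "drop i (xs @ [x]) = drop i xs @ [x]" "drop i xs \<noteq> []" by auto
    then show ?thesis using False by auto
  qed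
  qed
qed

lemma take_eq_single: "i \<le> length w \<Longrightarrow> (take i w = [e]) \<longleftrightarrow> (w \<noteq> [] \<and> i = 1 \<and> hd w = e)"
  by (cases w; cases i) (auto simp: take_eq_Nil)

lemma nc_mult_var_right: "nc_mult f (nc_var e) w =
   (if w \<noteq> [] \<and> last w = e then nov_mult (f (butlast w)) nov_one else 0)"
proof -
  have "nc_mult f (nc_var e) w = (\<Sum>i\<le>length w. if i = length w - 1 \<and> w \<noteq> [] \<and> last w = e
      then nov_mult (f (butlast w)) nov_one else 0)"
    unfolding nc_mult_def nc_var_def
    by (intro sum.cong refl) (auto simp: drop_eq_single butlast_conv_take)
  also have "\<dots> = (if w \<noteq> [] \<and> last w = e then nov_mult (f (butlast w)) nov_one else 0)"
    by (auto simp: sum.delta)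
  finally show ?thesis .
qed

lemma nc_mult_var_left: "nc_mult (nc_var e) f w =
   (if w \<noteq> [] \<and> hd w = e then nov_mult nov_one (f (tl w)) else 0)"
proof -
  have "nc_mult (nc_var e) f w = (\<Sum>i\<le>length w. if i = 1 \<and> w \<noteq> [] \<and> hd w = e
      then nov_mult nov_one (f (tl w)) else 0)"
    unfolding nc_mult_def nc_var_def
    by (intro sum.cong refl) (auto simp: take_eq_single drop_Suc)
  also have "\<dots> = (if w \<noteq> [] \<and> hd w = e then nov_mult nov_one (f (tl w)) else 0)"
    by (cases w) (simp_all add: sum.delta Suc_le_eq)
  finally show ?thesis .
qed

lemma nc_mult_const_right: "nc_mult f (nc_const c) w = nov_mult (f w) c"
proof -
  have "nc_mult f (nc_const c) w = (\<Sum>i\<le>length w. if i = length w then nov_mult (f w) c else 0)"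
    unfolding nc_mult_def nc_const_def
    by (intro sum.cong refl) auto
  also have "\<dots> = nov_mult (f w) c" by (simp add: sum.delta)
  finally show ?thesis .
qed

lemma nc_mult_zero_left[simp]: "nc_mult 0 g = 0"
  by (simp add: nc_mult_def fun_eq_iff)

lemma bdy_eq: assumes "inj Xe"
  shows "bdy Xe i = (if i \<in> range Xe then nc_var (inv Xe i) else 0)"
proof (cases "i \<in> range Xe")
  case True
  then obtain e where i: "i = Xe e" by auto
  have "bdy Xe i = (\<Sum>e'\<in>UNIV. if e' = e then nc_var e' else 0)"
    unfolding bdy_def i using injD[OF assms] by (intro sum.cong) auto
  then show ?thesis using i assms by (simp add: sum.delta)
next
  case False
  then show ?thesis unfolding bdy_def by (simp, intro sum.neutral, auto)
qed

lemma nc_prod_bdy: assumes "inj Xe"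
  shows "nc_prod (map (bdy Xe) is) w = (if is = map Xe w then nov_one else (0::real\<Rightarrow>'k::field))"
proof (induction "is" arbitrary: w)
  case Nil
  then show ?case by (simp add: nc_prod_def nc_one_def nc_const_def)
next
  case (Cons i "is")
  have P: "nc_prod (map (bdy Xe) (i # is)) = nc_mult (bdy Xe i) (nc_prod (map (bdy Xe) is))"
    by (simp add: nc_prod_def)
  show ?case
  proof (cases "i \<in> range Xe")
    case False
    then show ?thesis unfolding P by (cases w) (auto simp: bdy_eq[OF assms])
  next
    case True
    then obtain e where i: "i = Xe e" by auto
    have bi: "bdy Xe i = nc_var e" using i by (simp add: bdy_eq[OF assms] inv_f_f[OF assms])
    then show ?thesis unfolding P bi nc_mult_var_left Cons.IH using i assms
      by (cases w) (auto simp: nov_mult_one_left[OF nov0_one] dest: injD)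
  qed
qed

lemma map2_replicate: "length is = k \<Longrightarrow> map2 (\<lambda>g i. g i) (replicate k b) is = map b is"
  by (induction "is" arbitrary: k) auto

lemma ext_m_summand:
  fixes m :: "'i::finite list \<Rightarrow> 'i \<Rightarrow> real \<Rightarrow> 'k::field" and Xe :: "'e::finite \<Rightarrow> 'i"
  assumes nov: "structure_constants_in_novikov m" and inj: "inj Xe" and l: "length is = k"
  shows "nov_mult (nc_prod (rev (map2 (\<lambda>g i. g i) (replicate k (bdy Xe)) is)) w) (m is j) =
        (if is = rev (map Xe w) then m is j else 0)"
  unfolding map2_replicate[OF l] rev_map nc_prod_bdy[OF inj]
  using nov by (auto simp: structure_constants_in_novikov_def nov_mult_one_left rev_swap rev_map)

lemma ext_m_eval:
  fixes m :: "'i::finite list \<Rightarrow> 'i \<Rightarrow> real \<Rightarrow> 'k::field" and Xe :: "'e::finite \<Rightarrow> 'i"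
  assumes nov: "structure_constants_in_novikov m" and inj: "inj Xe"
  shows "ext_m m (replicate k (bdy Xe)) j w = (if k = length w then m (rev (map Xe w)) j else 0)"
proof -
  have "ext_m m (replicate k (bdy Xe)) j w =
     (\<Sum>is\<in>{is. length is = k}. if is = rev (map Xe w) then m is j else 0)"
    unfolding ext_m_def sum_fun_apply nc_mult_const_right
    by (intro sum.cong) (auto simp: ext_m_summand[OF nov inj])
  also have "\<dots> = (if k = length w then m (rev (map Xe w)) j else 0)"
    by (auto simp: sum.delta finite_list_length)
  finally show ?thesis .
qed

lemma m0b_eval:
  assumes nov: "structure_constants_in_novikov m" and inj: "inj Xe"
  shows "m0b m Xe j w = m (rev (map Xe w)) j"
  unfolding m0b_def sum_fun_apply ext_m_eval[OF assms]
  by (simp add: sum.delta)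

definition qterm where
  "qterm m j vs k2 p l = nov_mult (m (take k2 (drop p vs)) l) (m (take p vs @ [l] @ drop (p + k2) vs) j)"

lemma ainf_word:
  fixes m :: "'i::finite list \<Rightarrow> 'i \<Rightarrow> real \<Rightarrow> 'k::field" and Xe :: "'e::finite \<Rightarrow> 'i"
    and Xf :: "'f \<Rightarrow> 'i"
  assumes A: "Z2_filtered_Ainf_algebra isodd m" and U: "ainf_unit isodd m u"
    and B: "basis_shape isodd u Xe Xf"
  assumes vs: "set vs \<subseteq> range Xe"
  shows "(\<Sum>k2\<in>{0..length vs}. \<Sum>p\<in>{0..length vs - k2}. qterm m j vs k2 p u) +
         (\<Sum>k2\<in>{0..length vs}. \<Sum>p\<in>{0..length vs - k2}. \<Sum>l\<in>range Xf. qterm m j vs k2 p l) = 0"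
proof -
  have eq: "ainf_equations isodd m" and deg: "degree_one isodd m"
    using A by (auto simp: Z2_filtered_Ainf_algebra_def)
  have oddXe: "isodd (Xe e)" for e using B by (auto simp: basis_shape_def)
  have uXf: "u \<notin> range Xf" using B by (auto simp: basis_shape_def)
  have rest: "isodd l" if "l \<noteq> u" "l \<notin> range Xf" for l
    using B that oddXe by (auto simp: basis_shape_def)
  have sign: "nov_sign (\<Sum>q<p. sdeg isodd (vs ! q)) x = x" if "p \<le> length vs" for p x
  proof -
    have "sdeg isodd (vs ! q) = 0" if "q < p" for q
    proof -
      have "vs ! q \<in> set vs" using that \<open>p \<le> length vs\<close> by auto
      then show ?thesis using vs oddXe by (auto simp: sdeg_def)
    qed
    then show ?thesis by (simp add: nov_sign_def)
  qed
  have split: "(\<Sum>l\<in>UNIV. qterm m j vs k2 p l) = qterm m j vs k2 p u + (\<Sum>l\<in>range Xf. qterm m j vs k2 p l)" for k2 p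
  proof -
    have z: "qterm m j vs k2 p l = 0" if "l \<noteq> u" "l \<notin> range Xf" for l
    proof -
      have s0: "(\<Sum>i\<leftarrow>take k2 (drop p vs). sdeg isodd i) = 0"
      proof -
        have "set (take k2 (drop p vs)) \<subseteq> set vs" by (meson set_drop_subset set_take_subset subset_trans)
        then show ?thesis using vs oddXe by (auto simp: sum_list_eq_0_iff sdeg_def)
      qed
      have ne: "\<not> even (sdeg isodd l + (\<Sum>i\<leftarrow>take k2 (drop p vs). sdeg isodd i) + 1)"
        unfolding s0 using rest[OF that] by (simp add: sdeg_def)
      have "m (take k2 (drop p vs)) l = 0"
        using deg ne unfolding degree_one_def by blast
      then show ?thesis by (simp add: qterm_def)
    qed
    have "(\<Sum>l\<in>UNIV. qterm m j vs k2 p l) = (\<Sum>l\<in>insert u (range Xf). qterm m j vs k2 p l)"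
      by (rule sum.mono_neutral_right) (auto simp: z)
    also have "\<dots> = qterm m j vs k2 p u + (\<Sum>l\<in>range Xf. qterm m j vs k2 p l)"
      using uXf by (simp add: sum.insert)
    finally show ?thesis .
  qed
  have E: "(\<Sum>k2\<in>{0..length vs}. \<Sum>p\<in>{0..length vs - k2}.
        nov_sign (\<Sum>q<p. sdeg isodd (vs ! q))
          (\<Sum>l\<in>UNIV. qterm m j vs k2 p l)) = 0"
    using eq unfolding ainf_equations_def qterm_def by blast
  have "0 = (\<Sum>k2\<in>{0..length vs}. \<Sum>p\<in>{0..length vs - k2}. qterm m j vs k2 p u + (\<Sum>l\<in>range Xf. qterm m j vs k2 p l))"
    unfolding E[symmetric]
  proof (intro sum.cong refl)
    fix k2 p assume "k2 \<in> {0..length vs}" "p \<in> {0..length vs - k2}"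
    then have "p \<le> length vs" by auto
    then show "nov_sign (\<Sum>q<p. sdeg isodd (vs ! q)) (\<Sum>l\<in>UNIV. qterm m j vs k2 p l) =
      qterm m j vs k2 p u + (\<Sum>l\<in>range Xf. qterm m j vs k2 p l)"
      by (simp only: sign split)
  qed
  also have "\<dots> = (\<Sum>k2\<in>{0..length vs}. \<Sum>p\<in>{0..length vs - k2}. qterm m j vs k2 p u) +
         (\<Sum>k2\<in>{0..length vs}. \<Sum>p\<in>{0..length vs - k2}. \<Sum>l\<in>range Xf. qterm m j vs k2 p l)"
    by (simp add: sum.distrib)
  finally show ?thesis by simp
qed

lemma unit_part:
  fixes m :: "'i::finite list \<Rightarrow> 'i \<Rightarrow> real \<Rightarrow> 'k::field" and Xe :: "'e \<Rightarrow> 'i"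
  assumes nov: "structure_constants_in_novikov m" and U: "ainf_unit isodd m u"
    and inj: "inj Xe" and oddXe: "\<And>e. isodd (Xe e)"
  shows "(\<Sum>k2\<in>{0..length w}. \<Sum>p\<in>{0..length w - k2}. qterm m (Xe e) (rev (map Xe w)) k2 p u)
   = (if w \<noteq> [] \<and> hd w = e then m (rev (map Xe (tl w))) u else 0)
     - (if w \<noteq> [] \<and> last w = e then m (rev (map Xe (butlast w))) u else 0)"
proof -
  define vs where "vs = rev (map Xe w)"
  define n where "n = length w"
  have lvs: "length vs = n" by (simp add: vs_def n_def)
  have U2: "m [u, i] j = (if i = j then nov_one else 0)" for i j using U by (simp add: ainf_unit_def)
  have U3: "m [Xe a, u] j = - (if Xe a = j then nov_one else 0)" for a j
  proof -
    have "nov_sign 1 (m [Xe a, u] j) = (if Xe a = j then nov_one else 0)"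
      using U oddXe[of a] unfolding ainf_unit_def by (metis (full_types))
    then have "- m [Xe a, u] j = (if Xe a = j then nov_one else 0)" by (simp add: nov_sign_def)
    then show ?thesis by (metis minus_minus)
  qed
  have U0: "m is j = 0" if "length is \<noteq> 2" "u \<in> set is" for "is" j
    using U that by (simp add: ainf_unit_def)
  have mn: "m is j \<in> novikov0" for "is" j using nov by (simp add: structure_constants_in_novikov_def)
  have qz: "qterm m (Xe e) vs k2 p u = 0" if "k2 \<le> n" "p \<le> n - k2" "k2 + 1 \<noteq> n" for k2 p
  proof -
    have "length (take p vs @ [u] @ drop (p + k2) vs) = n + 1 - k2" using that lvs by auto
    then have "m (take p vs @ [u] @ drop (p + k2) vs) (Xe e) = 0" using that by (intro U0) auto
    then show ?thesis by (simp add: qterm_def)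
  qed
  show ?thesis
  proof (cases "w = []")
    case True
    then show ?thesis using qz[of 0 0] by (simp add: vs_def n_def)
  next
    case False
    then have n1: "n \<ge> 1" by (simp add: n_def Suc_le_eq)
    have "(\<Sum>k2\<in>{0..n}. \<Sum>p\<in>{0..n - k2}. qterm m (Xe e) vs k2 p u)
        = (\<Sum>k2\<in>{0..n}. if k2 = n - 1 then (\<Sum>p\<in>{0..1}. qterm m (Xe e) vs k2 p u) else 0)"
      using n1 qz by (intro sum.cong refl) auto
    also have "\<dots> = qterm m (Xe e) vs (n - 1) 0 u + qterm m (Xe e) vs (n - 1) 1 u"
      using n1 by (simp add: sum.delta)
    also have "qterm m (Xe e) vs (n - 1) 0 u = (if hd w = e then m (rev (map Xe (tl w))) u else 0)"
    proof -
      obtain a w' where w: "w = a # w'" using False by (cases w) auto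
      have "vs = rev (map Xe w') @ [Xe a]" by (simp add: vs_def w)
      moreover have "n - 1 = length (rev (map Xe w'))" by (simp add: n_def w)
      ultimately have t: "take (n - 1) vs = rev (map Xe w')" "drop (0 + (n - 1)) vs = [Xe a]" by simp_all
      show ?thesis unfolding qterm_def drop_0 t using inj mn by (auto simp: U2 w nov_mult_one_right dest: injD)
    qed
    also have "qterm m (Xe e) vs (n - 1) 1 u = - (if last w = e then m (rev (map Xe (butlast w))) u else 0)"
    proof -
      obtain z w' where w: "w = w' @ [z]" using False by (cases w rule: rev_cases) auto
      have "vs = Xe z # rev (map Xe w')" by (simp add: vs_def w)
      moreover have "n - 1 = length (rev (map Xe w'))" by (simp add: n_def w)
      ultimately have t: "take (n - 1) (drop 1 vs) = rev (map Xe w')" "take 1 vs = [Xe z]"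
        "drop (1 + (n - 1)) vs = []" by simp_all
      show ?thesis unfolding qterm_def t using inj mn
        by (auto simp: U3 w nov_mult_one_right nov_mult_uminus_right dest: injD)
    qed
    finally show ?thesis using False by (auto simp: vs_def n_def fun_eq_iff)
  qed
qed




lemma finite_lists_length_less: "finite {xs::('a::finite) list. length xs < N}"
proof -
  have "{xs::'a list. length xs < N} = (\<Union>n<N. {xs. length xs = n})" by auto
  then show ?thesis by (simp add: finite_list_length)
qed

definition Xw :: "'e list \<Rightarrow> ('e, 'k::field) ncseries" where
  "Xw \<alpha> = (\<lambda>w. if w = \<alpha> then nov_one else 0)"

lemma take_eq_conv: assumes "i \<le> length \<rho>" shows "(take i \<rho> = \<alpha>) \<longleftrightarrow> (i = length \<alpha> \<and> take (length \<alpha>) \<rho> = \<alpha>)"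
proof
  assume h: "take i \<rho> = \<alpha>"
  have "length (take i \<rho>) = i" using assms by simp
  then show "i = length \<alpha> \<and> take (length \<alpha>) \<rho> = \<alpha>" using h by simp
qed simp
lemma take_len_le: assumes "take (length \<alpha>) \<rho> = \<alpha>" shows "length \<alpha> \<le> length \<rho>"
proof (rule ccontr)
  assume "\<not> length \<alpha> \<le> length \<rho>"
  then have "length (take (length \<alpha>) \<rho>) < length \<alpha>" by simp
  then show False using assms by simp
qed

lemma nc_mult_Xw_left: "nc_mult (Xw \<alpha>) f \<rho> =
   (if take (length \<alpha>) \<rho> = \<alpha> then nov_mult nov_one (f (drop (length \<alpha>) \<rho>)) else 0)"
proof -
  have "nc_mult (Xw \<alpha>) f \<rho> = (\<Sum>i\<le>length \<rho>. if i = length \<alpha> \<and> take (length \<alpha>) \<rho> = \<alpha>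
      then nov_mult nov_one (f (drop (length \<alpha>) \<rho>)) else 0)"
    unfolding nc_mult_def
  proof (intro sum.cong refl)
    fix i assume i: "i \<in> {..length \<rho>}"
    show "nov_mult (Xw \<alpha> (take i \<rho>)) (f (drop i \<rho>)) = (if i = length \<alpha> \<and> take (length \<alpha>) \<rho> = \<alpha>
      then nov_mult nov_one (f (drop (length \<alpha>) \<rho>)) else 0)"
    proof (cases "take i \<rho> = \<alpha>")
      case True
      then have "i = length \<alpha> \<and> take (length \<alpha>) \<rho> = \<alpha>"
        using take_eq_conv[of i \<rho> \<alpha>] i by simp
      then show ?thesis using True by (simp add: Xw_def)
    next
      case False
      then have c: "\<not> (i = length \<alpha> \<and> take (length \<alpha>) \<rho> = \<alpha>)" by auto
      have x: "Xw \<alpha> (take i \<rho>) = 0" using False by (simp add: Xw_def)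
      show ?thesis by (subst if_not_P[OF c]) (simp add: x)
    qed
  qed
  also have "\<dots> = (if take (length \<alpha>) \<rho> = \<alpha> then nov_mult nov_one (f (drop (length \<alpha>) \<rho>)) else 0)"
  proof (cases "take (length \<alpha>) \<rho> = \<alpha>")
    case True
    then have "length \<alpha> \<le> length \<rho>" by (rule take_len_le)
    then show ?thesis using True by (simp add: sum.delta)
  qed simp
  finally show ?thesis .
qed

lemma term_eval:
  assumes P: "\<And>w. P w \<in> novikov0"
  shows "nc_mult (nc_mult (Xw \<alpha>) P) G w = (\<Sum>i\<le>length w.
     if take (length \<alpha>) (take i w) = \<alpha> then nov_mult (P (drop (length \<alpha>) (take i w))) (G (drop i w)) else 0)"
  unfolding nc_mult_def[of "nc_mult (Xw \<alpha>) P"] nc_mult_Xw_left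
  by (intro sum.cong refl) (simp add: nov_mult_one_left[OF P])

lemma prefix_sum:
  fixes F :: "'e::finite list \<Rightarrow> 'b::comm_monoid_add"
  assumes "length \<rho> < N"
  shows "(\<Sum>\<alpha>\<in>{\<alpha>. length \<alpha> < N}. if take (length \<alpha>) \<rho> = \<alpha> then F \<alpha> else 0)
       = (\<Sum>a\<le>length \<rho>. F (take a \<rho>))"
proof -
  have "(\<Sum>\<alpha>\<in>{\<alpha>. length \<alpha> < N}. if take (length \<alpha>) \<rho> = \<alpha> then F \<alpha> else 0)
      = (\<Sum>\<alpha>\<in>{\<alpha>. length \<alpha> < N} \<inter> {\<alpha>. take (length \<alpha>) \<rho> = \<alpha>}. F \<alpha>)"
    by (simp add: sum.inter_filter[symmetric] finite_lists_length_less Collect_conj_eq)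
  also have "{\<alpha>. length \<alpha> < N} \<inter> {\<alpha>. take (length \<alpha>) \<rho> = \<alpha>} = (\<lambda>a. take a \<rho>) ` {..length \<rho>}"
  proof (intro equalityI subsetI)
    fix \<alpha> assume "\<alpha> \<in> {\<alpha>. length \<alpha> < N} \<inter> {\<alpha>. take (length \<alpha>) \<rho> = \<alpha>}"
    then have t: "take (length \<alpha>) \<rho> = \<alpha>" by simp
    then have "length \<alpha> \<le> length \<rho>" by (rule take_len_le)
    then show "\<alpha> \<in> (\<lambda>a. take a \<rho>) ` {..length \<rho>}" using t by force
  next
    fix \<alpha> assume "\<alpha> \<in> (\<lambda>a. take a \<rho>) ` {..length \<rho>}"
    then show "\<alpha> \<in> {\<alpha>. length \<alpha> < N} \<inter> {\<alpha>. take (length \<alpha>) \<rho> = \<alpha>}"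
      using assms by (auto simp: min_def)
  qed
  also have "(\<Sum>\<alpha>\<in>(\<lambda>a. take a \<rho>) ` {..length \<rho>}. F \<alpha>) = (\<Sum>a\<le>length \<rho>. F (take a \<rho>))"
  proof (rule sum.reindex[unfolded comp_def])
    show "inj_on (\<lambda>a. take a \<rho>) {..length \<rho>}"
    proof (intro inj_onI)
      fix a b assume ab: "a \<in> {..length \<rho>}" "b \<in> {..length \<rho>}" "take a \<rho> = take b \<rho>"
      have la: "length (take a \<rho>) = a" using ab(1) by simp
      have lb: "length (take b \<rho>) = b" using ab(2) by simp
      have "a = length (take a \<rho>)" using la by simp
      also have "\<dots> = length (take b \<rho>)" using ab(3) by (rule arg_cong)
      also have "\<dots> = b" using lb .
      finally show "a = b" .
    qed
  qed
  finally show ?thesis .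
qed

lemma triangle_reindex:
  fixes g :: "nat \<Rightarrow> nat \<Rightarrow> 'b::comm_monoid_add"
  shows "(\<Sum>k2\<in>{0..n}. \<Sum>p\<in>{0..n - k2}. g k2 p) = (\<Sum>i\<le>n. \<Sum>a\<le>i. g (i - a) (n - i))"
proof -
  have "(\<Sum>k2\<in>{0..n}. \<Sum>p\<in>{0..n - k2}. g k2 p) = (\<Sum>(k2,p)\<in>Sigma {0..n} (\<lambda>k2. {0..n - k2}). g k2 p)"
    by (rule sum.Sigma) auto
  also have "\<dots> = (\<Sum>(i,a)\<in>Sigma {..n} (\<lambda>i. {..i}). g (i - a) (n - i))"
    apply (rule sum.reindex_bij_witness[of _ "\<lambda>(i,a). (i - a, n - i)" "\<lambda>(k2,p). (n - p, n - p - k2)"])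
    apply (clarsimp; arith)+
    done
  also have "\<dots> = (\<Sum>i\<le>n. \<Sum>a\<le>i. g (i - a) (n - i))"
    by (rule sum.Sigma[symmetric]) auto
  finally show ?thesis .
qed
lemma list_ids:
  assumes "a \<le> i" "i \<le> length w"
  shows "take (i - a) (drop (length w - i) (rev (map Xe w))) = rev (map Xe (drop a (take i w)))"
    and "take (length w - i) (rev (map Xe w)) = rev (map Xe (drop i w))"
    and "drop (length w - i + (i - a)) (rev (map Xe w)) = rev (map Xe (take a w))"
proof -
  have "drop (length w - i) (rev (map Xe w)) = rev (take i (map Xe w))"
    using assms by (simp add: drop_rev)
  also have "take (i - a) \<dots> = rev (drop a (take i (map Xe w)))"
    using assms by (simp add: take_rev)
  finally show "take (i - a) (drop (length w - i) (rev (map Xe w))) = rev (map Xe (drop a (take i w)))"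
    by (simp add: take_map drop_map)
  show "take (length w - i) (rev (map Xe w)) = rev (map Xe (drop i w))"
    using assms by (simp add: take_rev drop_map)
  have "length w - i + (i - a) = length w - a" using assms by simp
  then show "drop (length w - i + (i - a)) (rev (map Xe w)) = rev (map Xe (take a w))"
    using assms by (simp add: drop_rev take_map)
qed

lemma ideal_sum: "finite A \<Longrightarrow> (\<And>a. a \<in> A \<Longrightarrow> F a \<in> nc_ideal S) \<Longrightarrow> sum F A \<in> nc_ideal S"
  by (induction A rule: finite_induct) (auto intro: nc_ideal.zero nc_ideal.add)

theorem theorem3p8:
  fixes m :: "'i::finite list \<Rightarrow> 'i \<Rightarrow> real \<Rightarrow> 'k::field"
    and isodd :: "'i \<Rightarrow> bool"
    and u :: 'i
    and Xe :: "'e::finite \<Rightarrow> 'i"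
    and Xf :: "'f \<Rightarrow> 'i"
    and e :: 'e
  assumes "Z2_filtered_Ainf_algebra isodd m"
    and "ainf_unit isodd m u"
    and "basis_shape isodd u Xe Xf"
  shows "nc_mult (m0b m Xe u) (nc_var e) - nc_mult (nc_var e) (m0b m Xe u)
           \<in> completed_ideal (range (\<lambda>f. m0b m Xe (Xf f)))"
proof -
  note A = assms(1) and U = assms(2) and B = assms(3)
  have nov: "structure_constants_in_novikov m" using A by (simp add: Z2_filtered_Ainf_algebra_def)
  have mn: "m is j \<in> novikov0" for "is" j using nov by (simp add: structure_constants_in_novikov_def)
  have inj: "inj Xe" using B by (simp add: basis_shape_def)
  have oddXe: "isodd (Xe a)" for a using B by (simp add: basis_shape_def)
  have mev: "m0b m Xe l w = m (rev (map Xe w)) l" for l w by (rule m0b_eval[OF nov inj])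
  define W where "W = m0b m Xe u"
  define g where "g = nc_mult W (nc_var e) - nc_mult (nc_var e) W"
  define S where "S = range (\<lambda>f. m0b m Xe (Xf f))"
  have Wn: "W w \<in> novikov0" for w by (simp add: W_def mev mn)
  have gw: "g w = (if w \<noteq> [] \<and> last w = e then W (butlast w) else 0)
              - (if w \<noteq> [] \<and> hd w = e then W (tl w) else 0)" for w
    by (simp add: g_def nc_mult_var_right nc_mult_var_left nov_mult_one_left[OF Wn]
        nov_mult_one_right[OF Wn])
  have gser: "g \<in> nc_series"
    unfolding nc_series_def
  proof (intro CollectI allI)
    fix w show "g w \<in> novikov0" unfolding gw by (intro nov0_diff) (simp_all add: Wn nov0_zero)
  qed
  define G where "G = (\<lambda>\<alpha> l \<gamma>. m (rev (map Xe \<gamma>) @ [l] @ rev (map Xe \<alpha>)) (Xe e))"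
  define T where "T = (\<lambda>w l i a. nov_mult (m0b m Xe l (drop a (take i w))) (G (take a w) l (drop i w)))"
  \<comment> \<open>the A-infinity relation, word by word\<close>
  have gR: "g w = (\<Sum>l\<in>range Xf. \<Sum>i\<le>length w. \<Sum>a\<le>i. T w l i a)" for w
  proof -
    define vs where "vs = rev (map Xe w)"
    have setvs: "set vs \<subseteq> range Xe" by (auto simp: vs_def)
    have lvs: "length vs = length w" by (simp add: vs_def)
    have aw: "(\<Sum>k2\<in>{0..length vs}. \<Sum>p\<in>{0..length vs - k2}. qterm m (Xe e) vs k2 p u) +
         (\<Sum>k2\<in>{0..length vs}. \<Sum>p\<in>{0..length vs - k2}. \<Sum>l\<in>range Xf. qterm m (Xe e) vs k2 p l) = 0"
      by (rule ainf_word[OF A U B setvs])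
    have up: "(\<Sum>k2\<in>{0..length vs}. \<Sum>p\<in>{0..length vs - k2}. qterm m (Xe e) vs k2 p u) = - g w"
      unfolding lvs unfolding vs_def unit_part[OF nov U inj oddXe] gw W_def mev
      by (simp add: fun_eq_iff)
    have "g w = (\<Sum>k2\<in>{0..length w}. \<Sum>p\<in>{0..length w - k2}. \<Sum>l\<in>range Xf. qterm m (Xe e) vs k2 p l)"
      using aw unfolding up by (simp add: add_eq_0_iff lvs)
    also have "\<dots> = (\<Sum>i\<le>length w. \<Sum>a\<le>i. \<Sum>l\<in>range Xf. qterm m (Xe e) vs (i - a) (length w - i) l)"
      by (rule triangle_reindex)
    also have "\<dots> = (\<Sum>i\<le>length w. \<Sum>a\<le>i. \<Sum>l\<in>range Xf. T w l i a)"
    proof (intro sum.cong refl)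
      fix i a l assume "i \<in> {..length w}" "a \<in> {..i}"
      then have ai: "a \<le> i" "i \<le> length w" by auto
      show "qterm m (Xe e) vs (i - a) (length w - i) l = T w l i a"
        unfolding qterm_def vs_def list_ids[OF ai] T_def G_def mev by simp
    qed
    also have "\<dots> = (\<Sum>i\<le>length w. \<Sum>l\<in>range Xf. \<Sum>a\<le>i. T w l i a)"
      by (intro sum.cong refl sum.swap)
    also have "\<dots> = (\<Sum>l\<in>range Xf. \<Sum>i\<le>length w. \<Sum>a\<le>i. T w l i a)"
      by (rule sum.swap)
    finally show ?thesis .
  qed
  have approx: "\<exists>h\<in>nc_ideal S. \<forall>w. length w < N \<longrightarrow> g w = h w" for N
  proof
    define h where "h = (\<Sum>l\<in>range Xf. \<Sum>\<alpha>\<in>{\<alpha>::'e list. length \<alpha> < N}.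
        nc_mult (nc_mult (Xw \<alpha>) (m0b m Xe l)) (G \<alpha> l))"
    show "h \<in> nc_ideal S"
      unfolding h_def
    proof (intro ideal_sum finite_lists_length_less finite)
      fix l and \<alpha> :: "'e list" assume l: "l \<in> range Xf"
      have "m0b m Xe l \<in> nc_ideal S" using l by (auto simp: S_def intro: nc_ideal.gen)
      moreover have "Xw \<alpha> \<in> nc_series"
        by (auto simp: nc_series_def Xw_def nov0_one nov0_zero)
      moreover have "G \<alpha> l \<in> nc_series" by (simp add: nc_series_def G_def mn)
      ultimately show "nc_mult (nc_mult (Xw \<alpha>) (m0b m Xe l)) (G \<alpha> l) \<in> nc_ideal S"
        by (intro nc_ideal.rmult nc_ideal.lmult)
    qed
    show "\<forall>w. length w < N \<longrightarrow> g w = h w"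
    proof (intro allI impI)
      fix w :: "'e list" assume wN: "length w < N"
      have Pn: "m0b m Xe l w' \<in> novikov0" for l w' by (simp add: mev mn)
      have "h w = (\<Sum>l\<in>range Xf. \<Sum>\<alpha>\<in>{\<alpha>::'e list. length \<alpha> < N}. \<Sum>i\<le>length w.
          if take (length \<alpha>) (take i w) = \<alpha>
          then nov_mult (m0b m Xe l (drop (length \<alpha>) (take i w))) (G \<alpha> l (drop i w)) else 0)"
        unfolding h_def sum_fun_apply term_eval[OF Pn] ..
      also have "\<dots> = (\<Sum>l\<in>range Xf. \<Sum>i\<le>length w. \<Sum>\<alpha>\<in>{\<alpha>::'e list. length \<alpha> < N}.
          if take (length \<alpha>) (take i w) = \<alpha>
          then nov_mult (m0b m Xe l (drop (length \<alpha>) (take i w))) (G \<alpha> l (drop i w)) else 0)"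
        by (intro sum.cong refl sum.swap)
      also have "\<dots> = (\<Sum>l\<in>range Xf. \<Sum>i\<le>length w. \<Sum>a\<le>i. T w l i a)"
      proof (intro sum.cong refl)
        fix l i assume i: "i \<in> {..length w}"
        have lt: "length (take i w) < N" using wN by simp
        have li: "length (take i w) = i" using i by simp
        show "(\<Sum>\<alpha>\<in>{\<alpha>::'e list. length \<alpha> < N}.
          if take (length \<alpha>) (take i w) = \<alpha>
          then nov_mult (m0b m Xe l (drop (length \<alpha>) (take i w))) (G \<alpha> l (drop i w)) else 0)
          = (\<Sum>a\<le>i. T w l i a)"
          unfolding prefix_sum[OF lt] li
        proof (intro sum.cong refl)
          fix a assume "a \<in> {..i}"
          then have "length (take a (take i w)) = a" "take a (take i w) = take a w" using i by auto
          then show "nov_mult (m0b m Xe l (drop (length (take a (take i w))) (take i w)))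
                (G (take a (take i w)) l (drop i w)) = T w l i a"
            by (simp add: T_def)
        qed
      qed
      also have "\<dots> = g w" by (rule gR[symmetric])
      finally show "g w = h w" ..
    qed
  qed
  have "g \<in> completed_ideal S"
    unfolding completed_ideal_def nc_closure_def using gser approx by blast
  then show ?thesis by (simp add: g_def W_def S_def)
qed


end
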